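(* Suppose $\theta_0$ is the unique solution to $g(\theta)=0$ over $\Theta$ with $\theta_0$ in the interior of the compact set $\Theta$; there is $m<\infty$ with $\|Z\|<m$ and $\|W\|<m$ a.s.; and the conditional density $f_Y(y\mid W,Z)$ exists and is a.s. uniformly bounded in $y$ on the support of $Y$ by $\bar f$. Then for any $p\in[1,\infty]$, any estimator $\hat\theta_{\ell_p}$ that minimizes $\theta\mapsto\|\hat g(\theta)\|_p$ over $\Theta$ satisfies $\hat\theta_{\ell_p}\to\theta_0$ in probability.
   Context: Let $(Y_i,W_i,Z_i)$, $i=1,\dots,n$, be i.i.d. draws of $(Y,W,Z)$ with $Y\in\mathbb{R}$, $W\in\mathbb{R}^k$, $Z\in\mathbb{R}^k$. Fix $\tau\in(0,1)$. Define $g(\theta)=E[(1\{Y\le W'\theta\}-\tau)Z]$ and $\hat g(\theta)=\frac1n\sum_{i=1}^n(1\{Y_i\le W_i'\theta\}-\tau)Z_i$ for $\theta\in\Theta\subset\mathbb{R}^k$. *)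

theory Defs
  imports "HOL-Probability.Probability"
begin

definition lp_norm :: "ereal \<Rightarrow> real^'k \<Rightarrow> real" where
  "lp_norm p x =
     (if p = \<infinity> then Max (range (\<lambda>i. \<bar>x $ i\<bar>))
      else (\<Sum>i\<in>UNIV. \<bar>x $ i\<bar> powr real_of_ereal p) powr (1 / real_of_ereal p))"

text \<open>Population moment g(theta) = E[(1{Y <= W'theta} - tau) Z], with (Y,W,Z) the
  generic draw (observation 0 of the iid sequence).\<close>
definition g_pop :: "'a measure \<Rightarrow> ('a \<Rightarrow> real) \<Rightarrow> ('a \<Rightarrow> real^'k) \<Rightarrow> ('a \<Rightarrow> real^'k)
                      \<Rightarrow> real \<Rightarrow> real^'k \<Rightarrow> real^'k" where
  "g_pop M Y W Z \<tau> \<theta> =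
     integral\<^sup>L M (\<lambda>\<omega>. ((if Y \<omega> \<le> W \<omega> \<bullet> \<theta> then 1 else 0) - \<tau>) *\<^sub>R Z \<omega>)"

definition g_hat :: "(nat \<Rightarrow> 'a \<Rightarrow> real) \<Rightarrow> (nat \<Rightarrow> 'a \<Rightarrow> real^'k) \<Rightarrow> (nat \<Rightarrow> 'a \<Rightarrow> real^'k)
                      \<Rightarrow> real \<Rightarrow> nat \<Rightarrow> real^'k \<Rightarrow> 'a \<Rightarrow> real^'k" where
  "g_hat Y W Z \<tau> n \<theta> \<omega> =
     (1 / real n) *\<^sub>R (\<Sum>i<n. ((if Y i \<omega> \<le> W i \<omega> \<bullet> \<theta> then 1 else 0) - \<tau>) *\<^sub>R Z i \<omega>)"

end

theory Submission
  imports Defs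
begin
lemma lln_bounded:
  fixes M :: "'a measure" and X :: "nat \<Rightarrow> 'a \<Rightarrow> 'b::topological_space" and h :: "'b \<Rightarrow> real"
  assumes M: "prob_space M"
    and Xm: "\<And>i. X i \<in> borel_measurable M"
    and ind: "prob_space.indep_vars M (\<lambda>_. borel) X UNIV"
    and dis: "\<And>i. distr M borel (X i) = distr M borel (X 0)"
    and hm: "h \<in> borel_measurable borel"
    and hb: "\<And>x. \<bar>h x\<bar> \<le> B"
    and v: "v > 0"
  shows "((\<lambda>n. measure M {\<omega>\<in>space M. v \<le> \<bar>(\<Sum>i<n. h (X i \<omega>)) / real n - (\<integral>\<omega>. h (X 0 \<omega>) \<partial>M)\<bar>}) \<longlongrightarrow> 0) sequentially"
proof -
  interpret prob_space M by fact
  have B: "0 \<le> B" using hb[of undefined] by linarith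
  have ind': "indep_vars (\<lambda>_. borel) (\<lambda>i \<omega>. h (X i \<omega>)) UNIV"
    by (rule indep_vars_compose2[OF ind]) (use hm in auto)
  have dis': "distr M borel (\<lambda>\<omega>. h (X i \<omega>)) = distr M borel (\<lambda>\<omega>. h (X 0 \<omega>))" for i
  proof -
    have "distr M borel (\<lambda>\<omega>. h (X i \<omega>)) = distr (distr M borel (X i)) borel h"
      by (rule distr_distr[OF hm Xm[of i], unfolded comp_def, symmetric])
    also have "\<dots> = distr (distr M borel (X 0)) borel h" by (simp only: dis[of i])
    also have "\<dots> = distr M borel (\<lambda>\<omega>. h (X 0 \<omega>))"
      by (rule distr_distr[OF hm Xm[of 0], unfolded comp_def])
    finally show ?thesis .
  qed
  define c where "c = 2 * v\<^sup>2 / (2*B+2)\<^sup>2"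
  have c: "c > 0" using v B by (auto simp: c_def)
  have bound: "measure M {\<omega>\<in>space M. v \<le> \<bar>(\<Sum>i<n. h (X i \<omega>)) / real n - (\<integral>\<omega>. h (X 0 \<omega>) \<partial>M)\<bar>}
      \<le> 2 * exp (- c * real n)" if n: "n \<ge> 1" for n
  proof -
    interpret H: Hoeffding_ineq_iid M "{..<n}" "\<lambda>i \<omega>. h (X i \<omega>)" "\<lambda>\<omega>. h (X 0 \<omega>)" "-B-1" "B+1"
      "expectation (\<lambda>\<omega>. h (X 0 \<omega>))"
    proof unfold_locales
      show "indep_vars (\<lambda>_. borel) (\<lambda>i \<omega>. h (X i \<omega>)) {..<n}"
        using indep_vars_subset[OF ind'] by auto
      show "distr M borel (\<lambda>\<omega>. h (X i \<omega>)) = distr M borel (\<lambda>\<omega>. h (X 0 \<omega>))" for i by (rule dis')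
      show "random_variable borel (\<lambda>\<omega>. h (X 0 \<omega>))" using Xm hm by measurable
      show "AE x in M. h (X 0 x) \<in> {- B - 1..B + 1}"
      proof (rule AE_I2)
        fix x show "h (X 0 x) \<in> {- B - 1..B + 1}" using hb[of "X 0 x"] by (simp add: abs_le_iff)
      qed
    qed simp_all
    have "measure M {\<omega>\<in>space M. v \<le> \<bar>(\<Sum>i<n. h (X i \<omega>)) / real (card {..<n}) - (\<integral>\<omega>. h (X 0 \<omega>) \<partial>M)\<bar>}
      \<le> 2 * exp (-2 * real (card {..<n}) * v\<^sup>2 / ((B+1) - (-B-1))\<^sup>2)"
      by (rule H.Hoeffding_ineq_abs_ge') (use v B n in \<open>auto simp: lessThan_empty_iff\<close>)
    also have "-2 * real (card {..<n}) * v\<^sup>2 / ((B+1) - (-B-1))\<^sup>2 = - c * real n"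
      by (simp add: c_def field_simps)
    finally show ?thesis by simp
  qed
  have lim: "((\<lambda>n. 2 * exp (- c * real n)) \<longlongrightarrow> 0) sequentially"
  proof -
    have "(\<lambda>n. exp (- c) ^ n) \<longlonglongrightarrow> 0"
      by (rule LIMSEQ_power_zero) (use c in auto)
    then have "(\<lambda>n. 2 * exp (- c) ^ n) \<longlonglongrightarrow> 2 * 0"
      by (intro tendsto_mult tendsto_const)
    moreover have "exp (- c) ^ n = exp (- c * real n)" for n
      by (simp add: exp_of_nat_mult[symmetric] mult.commute)
    ultimately show ?thesis by simp
  qed
  show ?thesis
    by (rule tendsto_sandwich[OF _ _ tendsto_const lim])
       (auto intro!: eventually_sequentiallyI[of 1] bound[simplified])
qed
lemma lbint_interval_bound:
  fixes g :: "real \<Rightarrow> real"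
  assumes "\<And>y. g y \<le> c" "a \<le> b" "0 \<le> c"
  shows "(LBINT y:{a..b}. g y) \<le> (b - a) * c"
proof -
  have "(LBINT y:{a..b}. g y) = integral\<^sup>L lborel (\<lambda>y. indicator {a..b} y *\<^sub>R g y)"
    by (simp add: set_lebesgue_integral_def)
  also have "\<dots> \<le> integral\<^sup>L lborel (\<lambda>y. indicator {a..b} y *\<^sub>R c)"
  proof (rule integral_mono_AE')
    show "integrable lborel (\<lambda>y. indicator {a..b} y *\<^sub>R c)"
      by (rule integrable_indicator) (use assms(2) in \<open>auto simp: emeasure_lborel_Icc\<close>)
    show "AE x in lborel. indicator {a..b} x *\<^sub>R g x \<le> indicator {a..b} x *\<^sub>R c"
      by (rule AE_I2) (use assms(1) in \<open>auto simp: indicator_def\<close>)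
    show "AE x in lborel. 0 \<le> indicator {a..b} x *\<^sub>R c"
      by (rule AE_I2) (use assms(3) in auto)
  qed
  also have "\<dots> = (b - a) * c"
    using assms(2) by (simp add: emeasure_lborel_Icc)
  finally show ?thesis .
qed

lemma meas_comp_cont:
  assumes "h \<in> borel_measurable M" "continuous_on UNIV g"
  shows "(\<lambda>x. g (h x)) \<in> borel_measurable M"
  using measurable_compose[OF assms(1) borel_measurable_continuous_onI[OF assms(2)]] by simp

lemma band_prob:
  fixes M :: "'a measure" and Y0 :: "'a \<Rightarrow> real" and W0 Z0 :: "'a \<Rightarrow> real^'k"
    and f :: "real \<times> (real^'k) \<times> (real^'k) \<Rightarrow> real"
  assumes M: "prob_space M"
    and rv: "(\<lambda>\<omega>. (Y0 \<omega>, W0 \<omega>, Z0 \<omega>)) \<in> borel_measurable M"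
    and rect: "\<forall>A B. A \<in> sets borel \<longrightarrow> B \<in> sets borel \<longrightarrow>
             measure M {\<omega> \<in> space M. Y0 \<omega> \<in> A \<and> (W0 \<omega>, Z0 \<omega>) \<in> B}
             = integral\<^sup>L M (\<lambda>\<omega>. indicator B (W0 \<omega>, Z0 \<omega>)
                                 * (LBINT y:A. f (y, W0 \<omega>, Z0 \<omega>)))"
    and fb: "AE \<omega> in M. \<forall>y. f (y, W0 \<omega>, Z0 \<omega>) \<le> fbar"
    and fbar: "0 \<le> fbar"
    and Wb: "AE \<omega> in M. norm (W0 \<omega>) \<le> m"
    and r: "r > 0"
  shows "measure M {\<omega>\<in>space M. \<bar>Y0 \<omega> - W0 \<omega> \<bullet> \<theta>\<bar> \<le> r} \<le> 3 * r * fbar"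
proof -
  interpret prob_space M by fact
  have Ym[measurable]: "Y0 \<in> borel_measurable M"
    using meas_comp_cont[OF rv, of fst] by (simp add: continuous_on_fst continuous_on_id)
  have WZm[measurable]: "(\<lambda>\<omega>. (W0 \<omega>, Z0 \<omega>)) \<in> borel_measurable M"
    using meas_comp_cont[OF rv, of snd] by (simp add: continuous_on_snd continuous_on_id)
  have Wm[measurable]: "W0 \<in> borel_measurable M"
    using meas_comp_cont[OF WZm, of fst] by (simp add: continuous_on_fst continuous_on_id)
  define R where "R = m * norm \<theta>"
  define N where "N = nat \<lceil>2 * R / r\<rceil> + 1"
  define t where "t j = - R + real j * r" for j :: nat
  define Bs where "Bs j = {p::(real^'k) \<times> (real^'k). t j \<le> fst p \<bullet> \<theta> \<and> fst p \<bullet> \<theta> < t j + r}" for j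
  define As where "As j = {t j - r .. t j + 2 * r}" for j
  define S where "S j = {\<omega>\<in>space M. Y0 \<omega> \<in> As j \<and> (W0 \<omega>, Z0 \<omega>) \<in> Bs j}" for j
  define T where "T j = {\<omega>\<in>space M. (W0 \<omega>, Z0 \<omega>) \<in> Bs j}" for j
  have Bs_sets: "Bs j \<in> sets borel" for j
    unfolding Bs_def
    by (simp only: Collect_conj_eq) (intro sets.Int borel_closed borel_open closed_Collect_le open_Collect_less continuous_intros)
  have As_sets: "As j \<in> sets borel" for j unfolding As_def by simp
  have S_sets: "S j \<in> sets M" for j
  proof -
    have "S j = (Y0 -` As j \<inter> space M) \<inter> ((\<lambda>\<omega>. (W0 \<omega>, Z0 \<omega>)) -` Bs j \<inter> space M)"
      by (auto simp: S_def)
    then show ?thesis using Ym WZm As_sets Bs_sets by (auto intro!: sets.Int measurable_sets)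
  qed
  have T_sets: "T j \<in> sets M" for j
  proof -
    have "T j = ((\<lambda>\<omega>. (W0 \<omega>, Z0 \<omega>)) -` Bs j \<inter> space M)"
      by (auto simp: T_def)
    then show ?thesis using WZm Bs_sets by (auto intro!: measurable_sets)
  qed
  have E_sets: "{\<omega>\<in>space M. \<bar>Y0 \<omega> - W0 \<omega> \<bullet> \<theta>\<bar> \<le> r} \<in> sets M"
    by measurable
  have cover: "AE \<omega> in M. \<omega> \<in> {\<omega>\<in>space M. \<bar>Y0 \<omega> - W0 \<omega> \<bullet> \<theta>\<bar> \<le> r} \<longrightarrow> \<omega> \<in> (\<Union>j\<in>{..<N}. S j)"
    using Wb
  proof (rule eventually_mono)
    fix \<omega> assume w: "norm (W0 \<omega>) \<le> m"
    show "\<omega> \<in> {\<omega>\<in>space M. \<bar>Y0 \<omega> - W0 \<omega> \<bullet> \<theta>\<bar> \<le> r} \<longrightarrow> \<omega> \<in> (\<Union>j\<in>{..<N}. S j)"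
    proof
      assume om: "\<omega> \<in> {\<omega>\<in>space M. \<bar>Y0 \<omega> - W0 \<omega> \<bullet> \<theta>\<bar> \<le> r}"
      define a where "a = W0 \<omega> \<bullet> \<theta>"
      have "\<bar>a\<bar> \<le> norm (W0 \<omega>) * norm \<theta>" unfolding a_def by (rule Cauchy_Schwarz_ineq2)
      also have "\<dots> \<le> R" unfolding R_def by (rule mult_right_mono[OF w]) simp
      finally have aR: "\<bar>a\<bar> \<le> R" .
      define q where "q = (a + R) / r"
      have q0: "0 \<le> q" unfolding q_def using aR r by auto
      define j where "j = nat \<lfloor>q\<rfloor>"
      have rj: "real j = of_int \<lfloor>q\<rfloor>" unfolding j_def using q0 by simp
      have fl: "of_int \<lfloor>q\<rfloor> \<le> q" "q < of_int \<lfloor>q\<rfloor> + 1" by linarith+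
      have "real j * r \<le> q * r" using fl rj r by (simp add: mult_right_mono)
      also have "q * r = a + R" unfolding q_def using r by simp
      finally have t1: "t j \<le> a" unfolding t_def by simp
      have "a + R = q * r" unfolding q_def using r by simp
      also have "q * r < (real j + 1) * r" using fl rj r by (simp add: mult_strict_right_mono)
      finally have t2: "a < t j + r" unfolding t_def by (simp add: algebra_simps)
      have "q \<le> 2 * R / r" unfolding q_def using aR r by (simp add: divide_right_mono)
      then have "\<lfloor>q\<rfloor> \<le> \<lceil>2 * R / r\<rceil>" by (meson floor_le_ceiling floor_mono order_trans)
      then have jN: "j < N" unfolding j_def N_def by linarith
      have "Y0 \<omega> \<in> As j" using om t1 t2 unfolding As_def a_def by auto
      moreover have "(W0 \<omega>, Z0 \<omega>) \<in> Bs j" using t1 t2 unfolding Bs_def a_def by auto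
      ultimately have "\<omega> \<in> S j" using om unfolding S_def by auto
      then show "\<omega> \<in> (\<Union>j\<in>{..<N}. S j)" using jN by auto
    qed
  qed
  have "measure M {\<omega>\<in>space M. \<bar>Y0 \<omega> - W0 \<omega> \<bullet> \<theta>\<bar> \<le> r} \<le> measure M (\<Union>j\<in>{..<N}. S j)"
    by (rule finite_measure_mono_AE[OF cover]) (use S_sets in auto)
  also have "\<dots> \<le> (\<Sum>j<N. measure M (S j))"
    by (rule finite_measure_subadditive_finite) (use S_sets in auto)
  also have "\<dots> \<le> (\<Sum>j<N. 3 * r * fbar * measure M (T j))"
  proof (rule sum_mono)
    fix j assume "j \<in> {..<N}"
    have "measure M (S j) = integral\<^sup>L M (\<lambda>\<omega>. indicator (Bs j) (W0 \<omega>, Z0 \<omega>)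
                                 * (LBINT y:As j. f (y, W0 \<omega>, Z0 \<omega>)))"
      using rect As_sets Bs_sets unfolding S_def by blast
    also have "\<dots> \<le> integral\<^sup>L M (\<lambda>\<omega>. indicator (T j) \<omega> * (3 * r * fbar))"
    proof (rule integral_mono_AE')
      show "integrable M (\<lambda>\<omega>. indicator (T j) \<omega> * (3 * r * fbar))"
        using T_sets by (intro integrable_mult_left integrable_real_indicator) (auto simp: less_top[symmetric])
      show "AE \<omega> in M. indicator (Bs j) (W0 \<omega>, Z0 \<omega>) * (LBINT y:As j. f (y, W0 \<omega>, Z0 \<omega>))
            \<le> indicator (T j) \<omega> * (3 * r * fbar)"
        using fb
      proof (rule AE_mp[OF _ AE_I2[OF impI]])
        fix \<omega> assume fw: "\<forall>y. f (y, W0 \<omega>, Z0 \<omega>) \<le> fbar" and sp: "\<omega> \<in> space M"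
        have "(LBINT y:As j. f (y, W0 \<omega>, Z0 \<omega>)) \<le> ((t j + 2 * r) - (t j - r)) * fbar"
          unfolding As_def by (rule lbint_interval_bound) (use fw r fbar in auto)
        then have "(LBINT y:As j. f (y, W0 \<omega>, Z0 \<omega>)) \<le> 3 * r * fbar" by simp
        then show "indicator (Bs j) (W0 \<omega>, Z0 \<omega>) * (LBINT y:As j. f (y, W0 \<omega>, Z0 \<omega>))
            \<le> indicator (T j) \<omega> * (3 * r * fbar)"
          using sp by (auto simp: indicator_def T_def)
      qed
      show "AE \<omega> in M. 0 \<le> indicator (T j) \<omega> * (3 * r * fbar)"
        using r fbar by (auto intro!: AE_I2)
    qed
    also have "\<dots> = 3 * r * fbar * measure M (T j)"
      using T_sets by (simp add: mult.commute)
    finally show "measure M (S j) \<le> 3 * r * fbar * measure M (T j)" .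
  qed
  also have "\<dots> = 3 * r * fbar * measure M (\<Union>j\<in>{..<N}. T j)"
  proof -
    have disj: "disjoint_family_on T {..<N}"
    proof (unfold disjoint_family_on_def, intro ballI impI)
      fix i j assume "i \<in> {..<N}" "j \<in> {..<N}" "i \<noteq> j"
      show "T i \<inter> T j = {}"
      proof (rule ccontr)
        assume "T i \<inter> T j \<noteq> {}"
        then obtain x where "t i \<le> x" "x < t i + r" "t j \<le> x" "x < t j + r"
          unfolding T_def Bs_def by auto
        then have "real i * r < (real j + 1) * r" "real j * r < (real i + 1) * r"
          unfolding t_def by (auto simp: algebra_simps)
        then have "real i < real j + 1" "real j < real i + 1"
          using r by (auto simp: mult_less_cancel_right)
        then show False using \<open>i \<noteq> j\<close> by linarith
      qed
    qed
    show ?thesis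
      by (subst finite_measure_finite_Union[OF _ _ disj]) (use T_sets in \<open>auto simp: sum_distrib_left\<close>)
  qed
  also have "\<dots> \<le> 3 * r * fbar * 1"
    using r fbar by (intro mult_left_mono) auto
  finally show ?thesis by simp
qed

definition hf :: "real \<Rightarrow> real \<Rightarrow> real^'k \<Rightarrow> 'k \<Rightarrow> real \<times> (real^'k) \<times> (real^'k) \<Rightarrow> real" where
  "hf \<tau> m \<theta> c x = ((if fst x \<le> fst (snd x) \<bullet> \<theta> then 1 else 0) - \<tau>) * max (- m) (min m (snd (snd x) $ c))"

definition Df :: "real^'k \<Rightarrow> real \<Rightarrow> real \<times> (real^'k) \<times> (real^'k) \<Rightarrow> real" where
  "Df \<theta> r x = (if \<bar>fst x - fst (snd x) \<bullet> \<theta>\<bar> \<le> r then 1 else 0)"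

lemma hf_meas: fixes \<theta> :: "real^'k" shows "hf \<tau> m \<theta> c \<in> borel_measurable borel"
proof -
  define H where "H = {x::real \<times> (real^'k) \<times> (real^'k). fst x \<le> fst (snd x) \<bullet> \<theta>}"
  have H: "H \<in> sets borel" unfolding H_def
    by (intro borel_closed closed_Collect_le continuous_intros)
  have eq: "hf \<tau> m \<theta> c = (\<lambda>x. (indicator H x - \<tau>) * max (- m) (min m (snd (snd x) $ c)))"
    by (auto simp: hf_def H_def indicator_def fun_eq_iff)
  have c: "(\<lambda>x::real \<times> (real^'k) \<times> (real^'k). max (- m) (min m (snd (snd x) $ c))) \<in> borel_measurable borel"
    by (intro borel_measurable_continuous_onI continuous_intros)
  show ?thesis unfolding eq
    using H c by (intro borel_measurable_times borel_measurable_diff borel_measurable_indicator) auto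
qed

lemma Df_meas: fixes \<theta> :: "real^'k" shows "Df \<theta> r \<in> borel_measurable borel"
proof -
  define H where "H = {x::real \<times> (real^'k) \<times> (real^'k). \<bar>fst x - fst (snd x) \<bullet> \<theta>\<bar> \<le> r}"
  have H: "H \<in> sets borel" unfolding H_def
    by (intro borel_closed closed_Collect_le continuous_intros)
  have eq: "Df \<theta> r = indicator H"
    by (auto simp: Df_def H_def indicator_def fun_eq_iff)
  show ?thesis unfolding eq using H by auto
qed

lemma hf_bound: "0 \<le> m \<Longrightarrow> 0 < \<tau> \<Longrightarrow> \<tau> < 1 \<Longrightarrow> \<bar>hf \<tau> m \<theta> c x\<bar> \<le> m"
proof -
  assume m: "0 \<le> m" and t: "0 < \<tau>" "\<tau> < 1"
  have a: "\<bar>(if fst x \<le> fst (snd x) \<bullet> \<theta> then 1 else 0) - \<tau>\<bar> \<le> (1::real)" using t by auto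
  have b: "\<bar>max (- m) (min m (snd (snd x) $ c))\<bar> \<le> m" using m by auto
  show ?thesis unfolding hf_def abs_mult using mult_mono[OF a b] by simp
qed

lemma Df_bound: "\<bar>Df \<theta> r x\<bar> \<le> 1"
  by (simp add: Df_def)

lemma hf_diff:
  assumes m: "0 \<le> m" and w: "norm (fst (snd x)) \<le> m" and r: "m * dist \<theta> \<theta>' \<le> r"
  shows "\<bar>hf \<tau> m \<theta> c x - hf \<tau> m \<theta>' c x\<bar> \<le> m * Df \<theta> r x"
proof -
  define y where "y = fst x"
  define w where "w = fst (snd x)"
  define z where "z = max (- m) (min m (snd (snd x) $ c))"
  have zb: "\<bar>z\<bar> \<le> m" using m by (auto simp: z_def)
  show ?thesis
  proof (cases "(y \<le> w \<bullet> \<theta>) = (y \<le> w \<bullet> \<theta>')")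
    case True
    then have "hf \<tau> m \<theta> c x = hf \<tau> m \<theta>' c x" by (simp add: hf_def y_def w_def)
    then show ?thesis using m by (simp add: Df_def)
  next
    case False
    have "\<bar>w \<bullet> \<theta> - w \<bullet> \<theta>'\<bar> = \<bar>w \<bullet> (\<theta> - \<theta>')\<bar>" by (simp add: inner_diff_right)
    also have "\<dots> \<le> norm w * norm (\<theta> - \<theta>')" by (rule Cauchy_Schwarz_ineq2)
    also have "\<dots> \<le> m * dist \<theta> \<theta>'" unfolding dist_norm
      using w by (intro mult_right_mono) (auto simp: w_def)
    finally have "\<bar>w \<bullet> \<theta> - w \<bullet> \<theta>'\<bar> \<le> r" using r by linarith
    then have "\<bar>y - w \<bullet> \<theta>\<bar> \<le> r" using False by auto
    then have D: "Df \<theta> r x = 1" by (simp add: Df_def y_def w_def)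
    have "\<bar>hf \<tau> m \<theta> c x - hf \<tau> m \<theta>' c x\<bar> = \<bar>z\<bar>"
      using False by (auto simp: hf_def y_def w_def z_def[symmetric] algebra_simps)
    then show ?thesis using zb D by simp
  qed
qed

definition Mx :: "real^'k \<Rightarrow> real" where
  "Mx x = Max (range (\<lambda>i. \<bar>x $ i\<bar>))"

lemma Mx_ge: "\<bar>x $ i\<bar> \<le> Mx x"
  unfolding Mx_def by (rule Max_ge) auto

lemma Mx_le: "(\<And>i. \<bar>x $ i\<bar> \<le> b) \<Longrightarrow> Mx x \<le> b"
  unfolding Mx_def by (subst Max_le_iff) auto

lemma Mx_nonneg: "0 \<le> Mx x"
  using Mx_ge[of x undefined] by linarith

lemma Mx_pos: "x \<noteq> 0 \<Longrightarrow> 0 < Mx x"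
proof -
  assume "x \<noteq> 0"
  then obtain i where "x $ i \<noteq> 0" by (metis vec_eq_iff zero_index)
  then show ?thesis using Mx_ge[of x i] by linarith
qed

lemma Mx_diff: "(\<And>i. \<bar>x $ i - y $ i\<bar> \<le> b) \<Longrightarrow> \<bar>Mx x - Mx y\<bar> \<le> b"
proof -
  assume h: "\<And>i. \<bar>x $ i - y $ i\<bar> \<le> b"
  have "Mx x \<le> Mx y + b"
  proof (rule Mx_le)
    fix i show "\<bar>x $ i\<bar> \<le> Mx y + b" using h[of i] Mx_ge[of y i] by linarith
  qed
  moreover have "Mx y \<le> Mx x + b"
  proof (rule Mx_le)
    fix i show "\<bar>y $ i\<bar> \<le> Mx x + b" using h[of i] Mx_ge[of x i] by linarith
  qed
  ultimately show ?thesis by linarith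
qed

lemma lp_lower:
  assumes "1 \<le> p"
  shows "Mx x \<le> lp_norm p x"
proof (cases "p = \<infinity>")
  case True then show ?thesis by (simp add: lp_norm_def Mx_def)
next
  case False
  define q where "q = real_of_ereal p"
  have q: "1 \<le> q" using assms False unfolding q_def
    by (cases p) auto
  have lp: "lp_norm p x = (\<Sum>i\<in>UNIV. \<bar>x $ i\<bar> powr q) powr (1 / q)"
    using False by (simp add: lp_norm_def q_def)
  show ?thesis unfolding lp
  proof (rule Mx_le)
    fix i
    have "\<bar>x $ i\<bar> powr q \<le> (\<Sum>i\<in>UNIV. \<bar>x $ i\<bar> powr q)"
      by (rule member_le_sum) auto
    then have "(\<bar>x $ i\<bar> powr q) powr (1/q) \<le> (\<Sum>i\<in>UNIV. \<bar>x $ i\<bar> powr q) powr (1 / q)"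
      using q by (intro powr_mono2) auto
    moreover have "(\<bar>x $ i\<bar> powr q) powr (1/q) = \<bar>x $ i\<bar>"
      using q by (simp add: powr_powr)
    ultimately show "\<bar>x $ i\<bar> \<le> (\<Sum>i\<in>UNIV. \<bar>x $ i\<bar> powr q) powr (1 / q)" by simp
  qed
qed

lemma lp_upper:
  fixes x :: "real^'k"
  assumes "1 \<le> p"
  shows "lp_norm p x \<le> real CARD('k) * Mx x"
proof (cases "p = \<infinity>")
  case True
  have "1 * Mx x \<le> real CARD('k) * Mx x"
    by (intro mult_right_mono Mx_nonneg) (simp add: Suc_le_eq)
  then show ?thesis using True by (simp add: lp_norm_def Mx_def)
next
  case False
  define q where "q = real_of_ereal p"
  have q: "1 \<le> q" using assms False unfolding q_def
    by (cases p) auto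
  define K where "K = real CARD('k)"
  have K: "1 \<le> K" unfolding K_def by (simp add: Suc_le_eq)
  have lp: "lp_norm p x = (\<Sum>i\<in>UNIV. \<bar>x $ i\<bar> powr q) powr (1 / q)"
    using False by (simp add: lp_norm_def q_def)
  have "(\<Sum>i\<in>UNIV. \<bar>x $ i\<bar> powr q) \<le> (\<Sum>i\<in>(UNIV::'k set). Mx x powr q)"
    using q by (intro sum_mono powr_mono2 Mx_ge) auto
  also have "\<dots> = K * Mx x powr q" by (simp add: K_def)
  finally have S: "(\<Sum>i\<in>UNIV. \<bar>x $ i\<bar> powr q) \<le> K * Mx x powr q" .
  have "(\<Sum>i\<in>UNIV. \<bar>x $ i\<bar> powr q) powr (1 / q) \<le> (K * Mx x powr q) powr (1 / q)"
    using q S by (intro powr_mono2) (auto intro!: sum_nonneg)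
  also have "\<dots> = K powr (1/q) * Mx x"
    using q K Mx_nonneg[of x] by (simp add: powr_mult powr_powr)
  also have "\<dots> \<le> K * Mx x"
  proof (rule mult_right_mono[OF _ Mx_nonneg])
    have "K powr (1/q) \<le> K powr 1" using q K by (intro powr_mono) auto
    then show "K powr (1/q) \<le> K" using K by simp
  qed
  finally show ?thesis unfolding lp K_def .
qed


theorem lemma8:
  fixes M :: "'a measure"
    and Y :: "nat \<Rightarrow> 'a \<Rightarrow> real"
    and W Z :: "nat \<Rightarrow> 'a \<Rightarrow> real^'k"
    and \<tau> m fbar :: real
    and \<Theta> :: "(real^'k) set"
    and \<theta>0 :: "real^'k"
    and p :: ereal
    and \<theta>hat :: "nat \<Rightarrow> 'a \<Rightarrow> real^'k"
  assumes M: "prob_space M"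
    and tau: "0 < \<tau>" "\<tau> < 1"
    and rv: "\<And>i. (\<lambda>\<omega>. (Y i \<omega>, W i \<omega>, Z i \<omega>)) \<in> borel_measurable M"
    and indep: "prob_space.indep_vars M (\<lambda>_. borel) (\<lambda>i \<omega>. (Y i \<omega>, W i \<omega>, Z i \<omega>)) UNIV"
    and ident: "\<And>i. distr M borel (\<lambda>\<omega>. (Y i \<omega>, W i \<omega>, Z i \<omega>))
                    = distr M borel (\<lambda>\<omega>. (Y 0 \<omega>, W 0 \<omega>, Z 0 \<omega>))"
    and Theta_compact: "compact \<Theta>"
    and theta0_int: "\<theta>0 \<in> interior \<Theta>"
    and theta0_zero: "g_pop M (Y 0) (W 0) (Z 0) \<tau> \<theta>0 = 0"
    and theta0_unique: "\<And>\<theta>. \<theta> \<in> \<Theta> \<Longrightarrow> g_pop M (Y 0) (W 0) (Z 0) \<tau> \<theta> = 0 \<Longrightarrow> \<theta> = \<theta>0"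
    and bounded: "AE \<omega> in M. norm (Z 0 \<omega>) < m \<and> norm (W 0 \<omega>) < m"
    and cond_density: "\<exists>f :: real \<times> (real^'k) \<times> (real^'k) \<Rightarrow> real.
          f \<in> borel_measurable borel \<and> (\<forall>x. 0 \<le> f x) \<and>
          (\<forall>A B. A \<in> sets borel \<longrightarrow> B \<in> sets borel \<longrightarrow>
             measure M {\<omega> \<in> space M. Y 0 \<omega> \<in> A \<and> (W 0 \<omega>, Z 0 \<omega>) \<in> B}
             = integral\<^sup>L M (\<lambda>\<omega>. indicator B (W 0 \<omega>, Z 0 \<omega>)
                                 * (LBINT y:A. f (y, W 0 \<omega>, Z 0 \<omega>)))) \<and>
          (AE \<omega> in M. \<forall>y. f (y, W 0 \<omega>, Z 0 \<omega>) \<le> fbar)"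
    and p: "1 \<le> p"
    and est_meas: "\<And>n. \<theta>hat n \<in> borel_measurable M"
    and est_in: "\<And>n \<omega>. \<omega> \<in> space M \<Longrightarrow> \<theta>hat n \<omega> \<in> \<Theta>"
    and est_min: "\<And>n \<omega> \<theta>. \<omega> \<in> space M \<Longrightarrow> \<theta> \<in> \<Theta> \<Longrightarrow>
          lp_norm p (g_hat Y W Z \<tau> n (\<theta>hat n \<omega>) \<omega>) \<le> lp_norm p (g_hat Y W Z \<tau> n \<theta> \<omega>)"
  shows "\<forall>\<epsilon>>0. ((\<lambda>n. measure M {\<omega> \<in> space M. dist (\<theta>hat n \<omega>) \<theta>0 > \<epsilon>}) \<longlongrightarrow> 0) sequentially"
proof -
  interpret P: prob_space M by (rule M)
  from cond_density obtain f :: "real \<times> (real^'k) \<times> (real^'k) \<Rightarrow> real" where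
    fnn: "\<forall>x. 0 \<le> f x" and
    rect: "\<forall>A B. A \<in> sets borel \<longrightarrow> B \<in> sets borel \<longrightarrow>
             measure M {\<omega> \<in> space M. Y 0 \<omega> \<in> A \<and> (W 0 \<omega>, Z 0 \<omega>) \<in> B}
             = integral\<^sup>L M (\<lambda>\<omega>. indicator B (W 0 \<omega>, Z 0 \<omega>)
                                 * (LBINT y:A. f (y, W 0 \<omega>, Z 0 \<omega>)))" and
    fb: "AE \<omega> in M. \<forall>y. f (y, W 0 \<omega>, Z 0 \<omega>) \<le> fbar"
    by blast
  define X where "X = (\<lambda>i \<omega>. (Y i \<omega>, W i \<omega>, Z i \<omega>))"
  have Xm: "\<And>i. X i \<in> borel_measurable M" using rv by (simp add: X_def)
  have Xind: "P.indep_vars (\<lambda>_. borel) X UNIV" using indep by (simp add: X_def)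
  have Xdis: "\<And>i. distr M borel (X i) = distr M borel (X 0)" using ident by (simp add: X_def)
  have Y0m[measurable]: "Y 0 \<in> borel_measurable M"
    using meas_comp_cont[OF rv[of 0], of fst] by (simp add: continuous_on_fst continuous_on_id)
  have W0m[measurable]: "W 0 \<in> borel_measurable M"
    using meas_comp_cont[OF rv[of 0], of "\<lambda>x. fst (snd x)"] by (simp add: continuous_intros)
  have Z0m[measurable]: "Z 0 \<in> borel_measurable M"
    using meas_comp_cont[OF rv[of 0], of "\<lambda>x. snd (snd x)"] by (simp add: continuous_intros)
  have "AE \<omega> in M. 0 < m"
    using bounded by (rule eventually_mono) (auto intro: le_less_trans[OF norm_ge_zero])
  then have m0: "0 < m" by simp
  have "AE \<omega> in M. 0 \<le> fbar"
    using fb by (rule eventually_mono) (use fnn in \<open>meson order_trans\<close>)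
  then have fbar0: "0 \<le> fbar" by simp
  have AEall: "AE \<omega> in M. \<forall>i. norm (Z i \<omega>) < m \<and> norm (W i \<omega>) < m"
  proof (subst AE_all_countable, intro allI)
    fix i
    define Gs where "Gs = {x::real \<times> (real^'k) \<times> (real^'k). norm (snd (snd x)) < m \<and> norm (fst (snd x)) < m}"
    have Gs: "Gs \<in> sets borel" unfolding Gs_def
      by (intro borel_open open_Collect_conj open_Collect_less continuous_intros)
    have "AE \<omega> in M. X 0 \<omega> \<in> Gs" using bounded by (simp add: X_def Gs_def)
    then have "AE x in distr M borel (X 0). x \<in> Gs" using Gs Xm by (subst AE_distr_iff) auto
    then have "AE x in distr M borel (X i). x \<in> Gs" unfolding Xdis[of i] .
    then have "AE \<omega> in M. X i \<omega> \<in> Gs" using Gs Xm by (subst (asm) AE_distr_iff) auto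
    then show "AE \<omega> in M. norm (Z i \<omega>) < m \<and> norm (W i \<omega>) < m" by (simp add: X_def Gs_def)
  qed
  define gp where "gp = g_pop M (Y 0) (W 0) (Z 0) \<tau>"
  define E where "E = (\<lambda>h :: real \<times> (real^'k) \<times> (real^'k) \<Rightarrow> real. \<integral>\<omega>. h (X 0 \<omega>) \<partial>M)"
  have hX_int: "integrable M (\<lambda>\<omega>. h (X 0 \<omega>))" if "h \<in> borel_measurable borel" "\<And>x. \<bar>h x\<bar> \<le> B" for h :: "real \<times> (real^'k) \<times> (real^'k) \<Rightarrow> real" and B :: real
    by (rule P.integrable_const_bound[where B=B]) (use that Xm in \<open>auto intro!: measurable_compose[OF Xm]\<close>)
  have hf_b: "\<And>\<theta> c x. \<bar>hf \<tau> m \<theta> c x\<bar> \<le> m"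
    by (rule hf_bound) (use m0 tau in auto)
  have gp_comp: "gp \<theta> $ c = E (hf \<tau> m \<theta> c)" for \<theta> c
  proof -
    define v where "v = (\<lambda>\<omega>. ((if Y 0 \<omega> \<le> W 0 \<omega> \<bullet> \<theta> then 1 else 0) - \<tau>) *\<^sub>R Z 0 \<omega>)"
    have vm: "v \<in> borel_measurable M" unfolding v_def by measurable
    have vi: "integrable M v"
    proof (rule P.integrable_const_bound[where B=m])
      show "AE \<omega> in M. norm (v \<omega>) \<le> m" using bounded
      proof (rule eventually_mono)
        fix \<omega> assume z: "norm (Z 0 \<omega>) < m \<and> norm (W 0 \<omega>) < m"
        define a :: real where "a = (if Y 0 \<omega> \<le> W 0 \<omega> \<bullet> \<theta> then 1 else 0) - \<tau>"
        have a: "\<bar>a\<bar> \<le> 1" using tau by (auto simp: a_def)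
        have "norm (v \<omega>) = \<bar>a\<bar> * norm (Z 0 \<omega>)" by (simp add: v_def a_def)
        also have "\<dots> \<le> 1 * norm (Z 0 \<omega>)" by (rule mult_right_mono) (use a in auto)
        also have "\<dots> \<le> m" using z by simp
        finally show "norm (v \<omega>) \<le> m" .
      qed
    qed (rule vm)
    have "gp \<theta> $ c = integral\<^sup>L M v \<bullet> axis c 1"
      by (simp add: gp_def g_pop_def v_def cart_eq_inner_axis)
    also have "\<dots> = (\<integral>\<omega>. v \<omega> \<bullet> axis c 1 \<partial>M)"
      by (rule integral_inner_left[symmetric]) (use vi in auto)
    also have "\<dots> = (\<integral>\<omega>. hf \<tau> m \<theta> c (X 0 \<omega>) \<partial>M)"
    proof (rule integral_cong_AE)
      show "(\<lambda>\<omega>. v \<omega> \<bullet> axis c 1) \<in> borel_measurable M"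
        by (intro borel_measurable_inner vm borel_measurable_const)
      show "(\<lambda>\<omega>. hf \<tau> m \<theta> c (X 0 \<omega>)) \<in> borel_measurable M"
        by (rule measurable_compose[OF Xm hf_meas])
      show "AE \<omega> in M. v \<omega> \<bullet> axis c 1 = hf \<tau> m \<theta> c (X 0 \<omega>)" using bounded
      proof (rule eventually_mono)
        fix \<omega> assume "norm (Z 0 \<omega>) < m \<and> norm (W 0 \<omega>) < m"
        then have zc: "\<bar>Z 0 \<omega> $ c\<bar> \<le> m" using component_le_norm_cart[of "Z 0 \<omega>" c] by linarith
        have "v \<omega> \<bullet> axis c 1 = v \<omega> $ c" by (rule cart_eq_inner_axis[symmetric])
        also have "\<dots> = hf \<tau> m \<theta> c (X 0 \<omega>)"
          using zc by (simp add: v_def hf_def X_def abs_le_iff)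
        finally show "v \<omega> \<bullet> axis c 1 = hf \<tau> m \<theta> c (X 0 \<omega>)" .
      qed
    qed
    finally show ?thesis by (simp add: E_def)
  qed
  have EDf: "E (Df \<theta> r) \<le> 3 * r * fbar" if r: "0 < r" for \<theta> r
  proof -
    have S: "{\<omega>\<in>space M. \<bar>Y 0 \<omega> - W 0 \<omega> \<bullet> \<theta>\<bar> \<le> r} \<in> sets M" by measurable
    have "E (Df \<theta> r) = (\<integral>\<omega>. indicator {\<omega>\<in>space M. \<bar>Y 0 \<omega> - W 0 \<omega> \<bullet> \<theta>\<bar> \<le> r} \<omega> \<partial>M)"
      unfolding E_def by (rule Bochner_Integration.integral_cong[OF refl]) (auto simp: Df_def X_def indicator_def)
    also have "\<dots> = measure M {\<omega>\<in>space M. \<bar>Y 0 \<omega> - W 0 \<omega> \<bullet> \<theta>\<bar> \<le> r}"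
      using S by (simp add: less_top[symmetric])
    also have "\<dots> \<le> 3 * r * fbar"
    proof (rule band_prob[OF M rv[of 0] rect fb fbar0 _ r])
      show "AE \<omega> in M. norm (W 0 \<omega>) \<le> m" using bounded by (rule eventually_mono) auto
    qed
    finally show ?thesis .
  qed
  have Ediff: "\<bar>E (hf \<tau> m \<theta> c) - E (hf \<tau> m \<theta>' c)\<bar> \<le> m * E (Df \<theta> r)"
    if r: "0 < r" and d: "m * dist \<theta> \<theta>' \<le> r" for \<theta> \<theta>' c r
  proof -
    have i1: "integrable M (\<lambda>\<omega>. hf \<tau> m \<theta> c (X 0 \<omega>))" by (rule hX_int[OF hf_meas hf_b])
    have i2: "integrable M (\<lambda>\<omega>. hf \<tau> m \<theta>' c (X 0 \<omega>))" by (rule hX_int[OF hf_meas hf_b])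
    have i3: "integrable M (\<lambda>\<omega>. Df \<theta> r (X 0 \<omega>))" by (rule hX_int[OF Df_meas Df_bound])
    have "\<bar>E (hf \<tau> m \<theta> c) - E (hf \<tau> m \<theta>' c)\<bar> = \<bar>\<integral>\<omega>. hf \<tau> m \<theta> c (X 0 \<omega>) - hf \<tau> m \<theta>' c (X 0 \<omega>) \<partial>M\<bar>"
      by (simp add: E_def Bochner_Integration.integral_diff[OF i1 i2])
    also have "\<dots> \<le> (\<integral>\<omega>. \<bar>hf \<tau> m \<theta> c (X 0 \<omega>) - hf \<tau> m \<theta>' c (X 0 \<omega>)\<bar> \<partial>M)"
      by (rule integral_abs_bound)
    also have "\<dots> \<le> (\<integral>\<omega>. m * Df \<theta> r (X 0 \<omega>) \<partial>M)"
    proof (rule integral_mono_AE)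
      show "integrable M (\<lambda>\<omega>. \<bar>hf \<tau> m \<theta> c (X 0 \<omega>) - hf \<tau> m \<theta>' c (X 0 \<omega>)\<bar>)"
        by (intro Bochner_Integration.integrable_abs Bochner_Integration.integrable_diff i1 i2)
      show "integrable M (\<lambda>\<omega>. m * Df \<theta> r (X 0 \<omega>))"
        by (intro Bochner_Integration.integrable_mult_right i3)
      show "AE \<omega> in M. \<bar>hf \<tau> m \<theta> c (X 0 \<omega>) - hf \<tau> m \<theta>' c (X 0 \<omega>)\<bar> \<le> m * Df \<theta> r (X 0 \<omega>)"
        using bounded
      proof (rule eventually_mono)
        fix \<omega> assume "norm (Z 0 \<omega>) < m \<and> norm (W 0 \<omega>) < m"
        then have "norm (fst (snd (X 0 \<omega>))) \<le> m" by (simp add: X_def)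
        then show "\<bar>hf \<tau> m \<theta> c (X 0 \<omega>) - hf \<tau> m \<theta>' c (X 0 \<omega>)\<bar> \<le> m * Df \<theta> r (X 0 \<omega>)"
          by (rule hf_diff[OF less_imp_le[OF m0] _ d])
      qed
    qed
    also have "\<dots> = m * E (Df \<theta> r)" by (simp add: E_def)
    finally show ?thesis .
  qed
  have gp_lip: "\<bar>gp \<theta> $ c - gp \<theta>' $ c\<bar> \<le> 3 * m * m * fbar * dist \<theta> \<theta>'" for \<theta> \<theta>' c
  proof (cases "\<theta> = \<theta>'")
    case True then show ?thesis by simp
  next
    case False
    define r where "r = m * dist \<theta> \<theta>'"
    have r: "0 < r" using False m0 by (simp add: r_def)
    have "\<bar>gp \<theta> $ c - gp \<theta>' $ c\<bar> \<le> m * E (Df \<theta> r)"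
      using Ediff[OF r, of \<theta> \<theta>' c] by (simp add: gp_comp r_def)
    also have "\<dots> \<le> m * (3 * r * fbar)" by (rule mult_left_mono[OF EDf[OF r]]) (use m0 in simp)
    finally show ?thesis by (simp add: r_def algebra_simps)
  qed
  define G where "G \<theta> = Mx (gp \<theta>)" for \<theta>
  have G_lip: "dist (G \<theta>) (G \<theta>') \<le> (3 * m * m * fbar) * dist \<theta> \<theta>'" for \<theta> \<theta>'
    unfolding G_def dist_real_def by (rule Mx_diff) (rule gp_lip)
  have G_cont: "continuous_on UNIV G"
    by (rule lipschitz_on_continuous_on[OF lipschitz_onI[OF G_lip]]) (use m0 fbar0 in simp)
  show ?thesis
  proof (intro allI impI)
    fix \<epsilon> :: real assume \<epsilon>: "0 < \<epsilon>"
    have "\<exists>\<eta>>0. \<forall>\<theta>\<in>\<Theta>. \<epsilon> \<le> dist \<theta> \<theta>0 \<longrightarrow> \<eta> \<le> G \<theta>"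
    proof (cases "\<Theta> \<inter> {\<theta>. \<epsilon> \<le> dist \<theta> \<theta>0} = {}")
      case True then show ?thesis by (intro exI[of _ 1]) auto
    next
      case False
      have K: "compact (\<Theta> \<inter> {\<theta>. \<epsilon> \<le> dist \<theta> \<theta>0})"
        by (intro compact_Int_closed Theta_compact closed_Collect_le continuous_intros)
      obtain \<theta>s where \<theta>s: "\<theta>s \<in> \<Theta> \<inter> {\<theta>. \<epsilon> \<le> dist \<theta> \<theta>0}"
        and mn: "\<forall>\<theta>\<in>\<Theta> \<inter> {\<theta>. \<epsilon> \<le> dist \<theta> \<theta>0}. G \<theta>s \<le> G \<theta>"
        using continuous_attains_inf[OF K False continuous_on_subset[OF G_cont]] by blast
      have "\<theta>s \<noteq> \<theta>0" using \<theta>s \<epsilon> by auto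
      then have "gp \<theta>s \<noteq> 0" using theta0_unique \<theta>s by (auto simp: gp_def)
      then have "0 < G \<theta>s" by (simp add: G_def Mx_pos)
      then show ?thesis using mn by auto
    qed
    then obtain \<eta> where \<eta>: "0 < \<eta>" "\<And>\<theta>. \<theta> \<in> \<Theta> \<Longrightarrow> \<epsilon> \<le> dist \<theta> \<theta>0 \<Longrightarrow> \<eta> \<le> G \<theta>" by blast
    define K where "K = real CARD('k)"
    have K0: "0 \<le> K" by (simp add: K_def)
    define u where "u = \<eta> / (2 * (K + 1))"
    have u: "0 < u" using \<eta>(1) K0 by (simp add: u_def)
    have "(K + 1) * u = \<eta> / 2" using K0 by (simp add: u_def field_simps)
    then have Ku: "(K + 1) * u < \<eta>" using \<eta>(1) by linarith
    define \<delta> where "\<delta> = u / (12 * m * m * fbar + 1)"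
    have "0 \<le> 12 * m * m * fbar" using m0 fbar0 by simp
    then have den: "0 < 12 * m * m * fbar + 1" by linarith
    have \<delta>: "0 < \<delta>" using u den by (simp add: \<delta>_def)
    have \<delta>u: "\<delta> * (12 * m * m * fbar + 1) = u" using den by (simp add: \<delta>_def)
    define r where "r = m * \<delta>"
    have r: "0 < r" using m0 \<delta> by (simp add: r_def)
    define v where "v = u / (2 * (m + 1))"
    have v: "0 < v" using u m0 by (simp add: v_def)
    have mv: "(m + 1) * v = u / 2" using m0 by (simp add: v_def field_simps)
    have bnd: "2 * m * (3 * r * fbar) + (m + 1) * v \<le> u"
    proof -
      have "2 * m * (3 * r * fbar) = 6 * (\<delta> * (m * m * fbar))" by (simp add: r_def algebra_simps)
      moreover have "0 \<le> \<delta> * (m * m * fbar)" using \<delta> m0 fbar0 by simp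
      moreover have "12 * (\<delta> * (m * m * fbar)) + \<delta> = u" using \<delta>u by (simp add: algebra_simps)
      ultimately show ?thesis using mv \<delta> by linarith
    qed
    have "\<exists>k. finite k \<and> k \<subseteq> \<Theta> \<and> \<Theta> \<subseteq> (\<Union>x\<in>k. ball x \<delta>)"
      using seq_compact_imp_totally_bounded[OF compact_imp_seq_compact[OF Theta_compact], rule_format, OF \<delta>] .
    then obtain T where T: "finite T" "T \<subseteq> \<Theta>" "\<Theta> \<subseteq> (\<Union>t\<in>T. ball t \<delta>)"
      by (elim exE conjE) (rule that)
    define F where "F = (\<lambda>(t, c). hf \<tau> m t c) ` (T \<times> UNIV) \<union> (\<lambda>t. Df t r) ` T"
    have Ffin: "finite F" unfolding F_def using T(1) by auto
    have Fmeas: "h \<in> borel_measurable borel" if "h \<in> F" for h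
      using that by (auto simp: F_def hf_meas Df_meas)
    have Fbd: "\<exists>B. \<forall>x. \<bar>h x\<bar> \<le> B" if "h \<in> F" for h
      using that by (auto simp: F_def intro: exI[of _ m] exI[of _ 1] hf_b Df_bound)
    define Bad where "Bad n h = {\<omega>\<in>space M. v \<le> \<bar>(\<Sum>i<n. h (X i \<omega>)) / real n - E h\<bar>}" for n h
    have Bad_sets: "Bad n h \<in> sets M" if "h \<in> F" for n h
    proof -
      have [measurable]: "(\<lambda>\<omega>. h (X i \<omega>)) \<in> borel_measurable M" for i
        by (rule measurable_compose[OF Xm Fmeas[OF that]])
      show ?thesis unfolding Bad_def by measurable
    qed
    have Bad_lim: "(\<lambda>n. measure M (Bad n h)) \<longlonglongrightarrow> 0" if hF: "h \<in> F" for h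
    proof -
      obtain B where B: "\<And>x. \<bar>h x\<bar> \<le> B" using Fbd[OF hF] by blast
      show ?thesis unfolding Bad_def E_def
        by (rule lln_bounded[OF M Xm Xind Xdis Fmeas[OF hF] B v])
    qed
    have sum_lim: "(\<lambda>n. \<Sum>h\<in>F. measure M (Bad n h)) \<longlonglongrightarrow> 0"
      by (rule tendsto_null_sum) (rule Bad_lim)
    have main: "measure M {\<omega> \<in> space M. dist (\<theta>hat n \<omega>) \<theta>0 > \<epsilon>} \<le> (\<Sum>h\<in>F. measure M (Bad n h))"
      if n: "1 \<le> n" for n
    proof -
      have incl: "AE \<omega> in M. \<omega> \<in> {\<omega> \<in> space M. dist (\<theta>hat n \<omega>) \<theta>0 > \<epsilon>} \<longrightarrow> \<omega> \<in> (\<Union>h\<in>F. Bad n h)"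
        using AEall
      proof (rule eventually_mono, intro impI)
        fix \<omega> assume bd: "\<forall>i. norm (Z i \<omega>) < m \<and> norm (W i \<omega>) < m"
          and om: "\<omega> \<in> {\<omega> \<in> space M. dist (\<theta>hat n \<omega>) \<theta>0 > \<epsilon>}"
        show "\<omega> \<in> (\<Union>h\<in>F. Bad n h)"
        proof (rule ccontr)
          assume nb: "\<omega> \<notin> (\<Union>h\<in>F. Bad n h)"
          have sp: "\<omega> \<in> space M" using om by simp
          define mean where "mean h = (\<Sum>i<n. h (X i \<omega>)) / real n" for h
          have good: "\<bar>mean h - E h\<bar> < v" if "h \<in> F" for h
            using nb that sp by (auto simp: Bad_def mean_def not_le)
          define gh where "gh \<theta> = g_hat Y W Z \<tau> n \<theta> \<omega>" for \<theta>
          have comp: "gh \<theta> $ c = mean (hf \<tau> m \<theta> c)" for \<theta> c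
          proof -
            have "gh \<theta> $ c = (1 / real n) * (\<Sum>i<n. ((if Y i \<omega> \<le> W i \<omega> \<bullet> \<theta> then 1 else 0) - \<tau>) * Z i \<omega> $ c)"
              by (simp add: gh_def g_hat_def sum_component)
            also have "(\<Sum>i<n. ((if Y i \<omega> \<le> W i \<omega> \<bullet> \<theta> then 1 else 0) - \<tau>) * Z i \<omega> $ c)
                = (\<Sum>i<n. hf \<tau> m \<theta> c (X i \<omega>))"
            proof (rule sum.cong[OF refl])
              fix i
              have "\<bar>Z i \<omega> $ c\<bar> \<le> m" using bd component_le_norm_cart[of "Z i \<omega>" c] by (meson less_imp_le order_trans)
              then show "((if Y i \<omega> \<le> W i \<omega> \<bullet> \<theta> then 1 else 0) - \<tau>) * Z i \<omega> $ c = hf \<tau> m \<theta> c (X i \<omega>)"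
                by (simp add: hf_def X_def abs_le_iff)
            qed
            finally show ?thesis by (simp add: mean_def)
          qed
          have dev: "\<bar>gh \<theta>' $ c - gp \<theta>' $ c\<bar> \<le> u" if th: "\<theta>' \<in> \<Theta>" for \<theta>' c
          proof -
            obtain t where t: "t \<in> T" "dist t \<theta>' < \<delta>" using T(3) th by auto
            have dr: "m * dist t \<theta>' \<le> r" unfolding r_def using t m0 by (simp add: less_imp_le)
            have hF: "hf \<tau> m t c \<in> F" using t by (auto simp: F_def)
            have DF: "Df t r \<in> F" using t by (auto simp: F_def)
            have g1: "\<bar>mean (hf \<tau> m t c) - E (hf \<tau> m t c)\<bar> < v" by (rule good[OF hF])
            have g2: "\<bar>mean (Df t r) - E (Df t r)\<bar> < v" by (rule good[OF DF])
            have e1: "\<bar>E (hf \<tau> m t c) - E (hf \<tau> m \<theta>' c)\<bar> \<le> m * E (Df t r)" by (rule Ediff[OF r dr])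
            have e2: "E (Df t r) \<le> 3 * r * fbar" by (rule EDf[OF r])
            have n0: "0 < real n" using n by simp
            have s1: "\<bar>mean (hf \<tau> m \<theta>' c) - mean (hf \<tau> m t c)\<bar> \<le> m * mean (Df t r)"
            proof -
              have "\<bar>mean (hf \<tau> m \<theta>' c) - mean (hf \<tau> m t c)\<bar>
                  = \<bar>\<Sum>i<n. hf \<tau> m t c (X i \<omega>) - hf \<tau> m \<theta>' c (X i \<omega>)\<bar> / real n"
                using n0 by (simp add: mean_def sum_subtractf diff_divide_distrib[symmetric] abs_minus_commute)
              also have "\<dots> \<le> (\<Sum>i<n. m * Df t r (X i \<omega>)) / real n"
              proof (rule divide_right_mono)
                have "\<bar>\<Sum>i<n. hf \<tau> m t c (X i \<omega>) - hf \<tau> m \<theta>' c (X i \<omega>)\<bar>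
                    \<le> (\<Sum>i<n. \<bar>hf \<tau> m t c (X i \<omega>) - hf \<tau> m \<theta>' c (X i \<omega>)\<bar>)" by (rule sum_abs)
                also have "\<dots> \<le> (\<Sum>i<n. m * Df t r (X i \<omega>))"
                proof (rule sum_mono)
                  fix i
                  have "norm (fst (snd (X i \<omega>))) \<le> m" using bd by (simp add: X_def less_imp_le)
                  then show "\<bar>hf \<tau> m t c (X i \<omega>) - hf \<tau> m \<theta>' c (X i \<omega>)\<bar> \<le> m * Df t r (X i \<omega>)"
                    by (rule hf_diff[OF less_imp_le[OF m0] _ dr])
                qed
                finally show "\<bar>\<Sum>i<n. hf \<tau> m t c (X i \<omega>) - hf \<tau> m \<theta>' c (X i \<omega>)\<bar> \<le> (\<Sum>i<n. m * Df t r (X i \<omega>))" .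
              qed (use n0 in simp)
              also have "\<dots> = m * mean (Df t r)" by (simp add: mean_def sum_distrib_left)
              finally show ?thesis .
            qed
            have s2: "m * mean (Df t r) \<le> m * E (Df t r) + m * v"
              using g2 m0 by (simp add: distrib_left[symmetric] mult_left_mono)
            have s3: "m * E (Df t r) \<le> m * (3 * r * fbar)" using e2 m0 by (simp add: mult_left_mono)
            have "gh \<theta>' $ c - gp \<theta>' $ c = mean (hf \<tau> m \<theta>' c) - E (hf \<tau> m \<theta>' c)"
              by (simp add: comp gp_comp)
            then have "\<bar>gh \<theta>' $ c - gp \<theta>' $ c\<bar> \<le> 2 * (m * (3 * r * fbar)) + (m + 1) * v"
              using s1 s2 s3 g1 e1 by (simp add: algebra_simps; linarith)
            then show ?thesis using bnd by (simp add: algebra_simps)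
          qed
          define th where "th = \<theta>hat n \<omega>"
          have thT: "th \<in> \<Theta>" using est_in[OF sp] by (simp add: th_def)
          have t0T: "\<theta>0 \<in> \<Theta>" using theta0_int interior_subset by blast
          have "\<bar>Mx (gp th) - Mx (gh th)\<bar> \<le> u"
            by (rule Mx_diff) (use dev[OF thT] in \<open>simp add: abs_minus_commute\<close>)
          then have a1: "G th \<le> Mx (gh th) + u" by (simp add: G_def)
          have a2: "Mx (gh th) \<le> lp_norm p (gh th)" by (rule lp_lower[OF p])
          have a3: "lp_norm p (gh th) \<le> lp_norm p (gh \<theta>0)"
            using est_min[OF sp t0T] by (simp add: gh_def th_def)
          have a4: "lp_norm p (gh \<theta>0) \<le> K * Mx (gh \<theta>0)" unfolding K_def by (rule lp_upper[OF p])
          have "Mx (gh \<theta>0) \<le> u"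
          proof (rule Mx_le)
            fix i show "\<bar>gh \<theta>0 $ i\<bar> \<le> u" using dev[OF t0T, of i] theta0_zero by (simp add: gp_def)
          qed
          then have a5: "K * Mx (gh \<theta>0) \<le> K * u" by (rule mult_left_mono[OF _ K0])
          have "G th < \<eta>" using a1 a2 a3 a4 a5 Ku by (simp add: algebra_simps)
          moreover have "\<epsilon> \<le> dist th \<theta>0" using om by (simp add: th_def)
          ultimately show False using \<eta>(2)[OF thT] by linarith
        qed
      qed
      have "measure M {\<omega> \<in> space M. dist (\<theta>hat n \<omega>) \<theta>0 > \<epsilon>} \<le> measure M (\<Union>h\<in>F. Bad n h)"
        by (rule P.finite_measure_mono_AE[OF incl]) (use Bad_sets Ffin in auto)
      also have "\<dots> \<le> (\<Sum>h\<in>F. measure M (Bad n h))"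
        by (rule P.finite_measure_subadditive_finite) (use Bad_sets Ffin in auto)
      finally show ?thesis .
    qed
    show "((\<lambda>n. measure M {\<omega> \<in> space M. dist (\<theta>hat n \<omega>) \<theta>0 > \<epsilon>}) \<longlongrightarrow> 0) sequentially"
      by (rule tendsto_sandwich[OF _ _ tendsto_const sum_lim])
         (auto intro!: eventually_sequentiallyI[of 1] main)
  qed
qed

end
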